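(* Let $n\ge 2$ and let $G\subsetneq\mathbb{R}^n$ be a domain. Suppose that $G$ is $\varphi$-uniform for some strictly increasing homeomorphism $\varphi:[0,\infty)\to[0,\infty)$ with $\varphi(0)=0$, and that $G$ satisfies the twisted cone condition. Then $G$ is uniform.
   Context: For a domain $G\subsetneq\mathbb{R}^n$ and $x\in G$, $\delta(x)=\delta_G(x)$ denotes the Euclidean distance from $x$ to $\partial G$. All paths are rectifiable, $\ell(\gamma)$ denotes Euclidean length, and for points $a,b$ on a path $\gamma$, $\gamma[a,b]$ is the subpath between them. The quasihyperbolic metric is $k_G(x,y)=\inf_\gamma\int_\gamma \frac{|dz|}{\delta(z)}$, the infimum over rectifiable paths $\gamma$ joining $x$ and $y$ in $G$. The domain $G$ is $\varphi$-uniform if $k_G(x,y)\le\varphi\big(\frac{|x-y|}{\min\{\delta(x),\delta(y)\}}\big)$ for all $x,y\in G$. $G$ satisfies the twisted cone condition if there is a constant $c>0$ such that every $x,y\in G$ can be joined by a rectifiable path $\gamma\subset G$ with $\min\{\ell(\gamma[x,z]),\ell(\gamma[z,y])\}\le c\,\delta(z)$ for all $z\in\gamma$. $G$ is uniform if there is $C\ge1$ such that every $x,y\in G$ can be joined by a path $\gamma\subset G$ with (i) $\ell(\gamma)\le C|x-y|$ and (ii) $\delta(z)\ge \frac1C\min\{\ell(\gamma[x,z]),\ell(\gamma[z,y])\}$ for all $z\in\gamma$. *)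

theory Defs
  imports "HOL-Analysis.Analysis"
begin

definition bdist :: "'a::euclidean_space set \<Rightarrow> 'a \<Rightarrow> real" where
  "bdist G x = infdist x (frontier G)"

definition seg_length :: "(real \<Rightarrow> 'a::real_normed_vector) \<Rightarrow> real \<Rightarrow> real \<Rightarrow> ennreal" where
  "seg_length g a b =
     (SUP ts \<in> {ts. sorted ts \<and> ts \<noteq> [] \<and> hd ts = a \<and> last ts = b}.
        \<Sum>i<length ts - 1. ennreal (dist (g (ts ! i)) (g (ts ! Suc i))))"

definition path_len :: "(real \<Rightarrow> 'a::real_normed_vector) \<Rightarrow> ennreal" where
  "path_len g = seg_length g 0 1"

definition rectifiable_path :: "(real \<Rightarrow> 'a::real_normed_vector) \<Rightarrow> bool" where
  "rectifiable_path g \<longleftrightarrow> path g \<and> path_len g < \<infinity>"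

definition arclen_fun :: "(real \<Rightarrow> 'a::real_normed_vector) \<Rightarrow> real \<Rightarrow> real" where
  "arclen_fun g t = enn2real (seg_length g 0 (max 0 (min 1 t)))"

text \<open>Quasihyperbolic length: the line integral of 1/delta over g with respect
  to arc length, as a Lebesgue--Stieltjes integral against ds(t).\<close>
definition qh_length :: "'a::euclidean_space set \<Rightarrow> (real \<Rightarrow> 'a) \<Rightarrow> ennreal" where
  "qh_length G g = (\<integral>\<^sup>+ t \<in> {0..1}. ennreal (1 / bdist G (g t)) \<partial>interval_measure (arclen_fun g))"

definition qh_metric :: "'a::euclidean_space set \<Rightarrow> 'a \<Rightarrow> 'a \<Rightarrow> ennreal" where
  "qh_metric G x y =
     (INF g \<in> {g. rectifiable_path g \<and> path_image g \<subseteq> G \<and> pathstart g = x \<and> pathfinish g = y}.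
        qh_length G g)"

definition phi_uniform :: "(real \<Rightarrow> real) \<Rightarrow> 'a::euclidean_space set \<Rightarrow> bool" where
  "phi_uniform \<phi> G \<longleftrightarrow>
     (\<forall>x\<in>G. \<forall>y\<in>G. qh_metric G x y \<le> ennreal (\<phi> (dist x y / min (bdist G x) (bdist G y))))"

definition twisted_cone :: "'a::euclidean_space set \<Rightarrow> bool" where
  "twisted_cone G \<longleftrightarrow> (\<exists>c>0. \<forall>x\<in>G. \<forall>y\<in>G. \<exists>g.
      rectifiable_path g \<and> path_image g \<subseteq> G \<and> pathstart g = x \<and> pathfinish g = y \<and>
      (\<forall>t\<in>{0..1}. min (seg_length g 0 t) (seg_length g t 1) \<le> ennreal (c * bdist G (g t))))"

definition uniform_domain :: "'a::euclidean_space set \<Rightarrow> bool" where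
  "uniform_domain G \<longleftrightarrow> (\<exists>C\<ge>1. \<forall>x\<in>G. \<forall>y\<in>G. \<exists>g.
      rectifiable_path g \<and> path_image g \<subseteq> G \<and> pathstart g = x \<and> pathfinish g = y \<and>
      path_len g \<le> ennreal (C * dist x y) \<and>
      (\<forall>t\<in>{0..1}. ennreal (bdist G (g t)) \<ge> ennreal (1 / C) * min (seg_length g 0 t) (seg_length g t 1)))"

end

theory Submission
  imports Defs
begin

fun psum :: "(real \<Rightarrow> 'a::real_normed_vector) \<Rightarrow> real list \<Rightarrow> real" where
  "psum g (x # y # xs) = dist (g x) (g y) + psum g (y # xs)"
| "psum g _ = 0"

lemma psum_nonneg: "psum g ts \<ge> 0"
  by (induction g ts rule: psum.induct) auto

lemma sum_eq_psum:
  "(\<Sum>i<length ts - 1. ennreal (dist (g (ts ! i)) (g (ts ! Suc i)))) = ennreal (psum g ts)"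
proof (induction g ts rule: psum.induct)
  case (1 g x y xs)
  have "(\<Sum>i<length (x # y # xs) - 1. ennreal (dist (g ((x # y # xs) ! i)) (g ((x # y # xs) ! Suc i))))
     = ennreal (dist (g x) (g y)) + (\<Sum>i<length (y # xs) - 1. ennreal (dist (g ((y # xs) ! i)) (g ((y # xs) ! Suc i))))"
  proof -
    have e: "length (x # y # xs) - 1 = Suc (length (y # xs) - 1)" by simp
    show ?thesis unfolding e sum.lessThan_Suc_shift by (simp only: nth_Cons_0 nth_Cons_Suc)
  qed
  also have "\<dots> = ennreal (psum g (x # y # xs))"
    using 1 by (simp add: ennreal_plus psum_nonneg)
  finally show ?case .
qed auto

definition parts :: "real \<Rightarrow> real \<Rightarrow> real list set" where
  "parts a b = {ts. sorted ts \<and> ts \<noteq> [] \<and> hd ts = a \<and> last ts = b}"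

lemma seg_def2: "seg_length g a b = (SUP ts \<in> parts a b. ennreal (psum g ts))"
  unfolding seg_length_def parts_def sum_eq_psum ..

lemma sorted_hd_le_mem: "sorted ts \<Longrightarrow> ts \<noteq> [] \<Longrightarrow> x \<in> set ts \<Longrightarrow> hd ts \<le> x"
  by (cases ts) auto

lemma sorted_mem_le_last: "sorted ts \<Longrightarrow> ts \<noteq> [] \<Longrightarrow> x \<in> set ts \<Longrightarrow> x \<le> last ts"
proof -
  assume a: "sorted ts" "ts \<noteq> []" "x \<in> set ts"
  have "ts = butlast ts @ [last ts]" using a(2) by simp
  then have "sorted (butlast ts @ [last ts])" using a(1) by simp
  then have "\<forall>y\<in>set (butlast ts). y \<le> last ts" by (simp add: sorted_append)
  moreover have "x \<in> set (butlast ts @ [last ts])"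
    using a(2,3) by simp
  then have "x \<in> set (butlast ts) \<or> x = last ts" by auto
  ultimately show ?thesis by auto
qed

lemma parts_mem: "ts \<in> parts a b \<Longrightarrow> x \<in> set ts \<Longrightarrow> a \<le> x \<and> x \<le> b"
  unfolding parts_def using sorted_hd_le_mem sorted_mem_le_last by blast

lemma parts_le: "ts \<in> parts a b \<Longrightarrow> a \<le> b"
  using parts_mem[of ts a b "hd ts"] unfolding parts_def by auto

lemma parts_two: "a \<le> b \<Longrightarrow> [a, b] \<in> parts a b"
  unfolding parts_def by auto

lemma parts_ne: "a \<le> b \<Longrightarrow> parts a b \<noteq> {}"
  using parts_two by blast

lemma seg_upper: "ts \<in> parts a b \<Longrightarrow> ennreal (psum g ts) \<le> seg_length g a b"
  unfolding seg_def2 by (rule SUP_upper)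

lemma seg_ge_dist: "a \<le> b \<Longrightarrow> ennreal (dist (g a) (g b)) \<le> seg_length g a b"
  using seg_upper[OF parts_two, of a b g] by simp

lemma seg_empty: "b < a \<Longrightarrow> seg_length g a b = 0"
proof -
  assume "b < a"
  then have "parts a b = {}" using parts_le by fastforce
  then show ?thesis unfolding seg_def2 by (simp add: bot_ennreal)
qed

lemma psum_const: "(\<And>x. x \<in> set ts \<Longrightarrow> g x = g a) \<Longrightarrow> psum g ts = 0"
  by (induction g ts rule: psum.induct) auto

lemma seg_refl: "seg_length g a a = 0"
proof -
  have "psum g ts = 0" if "ts \<in> parts a a" for ts
    using psum_const[of ts g a] parts_mem[OF that] by force
  then show ?thesis unfolding seg_def2 by (simp add: parts_ne)
qed

lemma psum_cong: "(\<And>x. x \<in> set ts \<Longrightarrow> g x = h x) \<Longrightarrow> psum g ts = psum h ts"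
  by (induction g ts rule: psum.induct) auto

lemma seg_cong: "(\<And>t. a \<le> t \<Longrightarrow> t \<le> b \<Longrightarrow> g t = h t) \<Longrightarrow> seg_length g a b = seg_length h a b"
  unfolding seg_def2
proof (rule SUP_cong[OF refl])
  fix ts assume h: "ts \<in> parts a b"
  assume e: "\<And>t. a \<le> t \<Longrightarrow> t \<le> b \<Longrightarrow> g t = h t"
  have "psum g ts = psum h ts"
  proof (rule psum_cong)
    fix x assume "x \<in> set ts"
    then show "g x = h x" using parts_mem[OF h] e by blast
  qed
  then show "ennreal (psum g ts) = ennreal (psum h ts)" by simp
qed

lemma psum_append: "psum g (xs @ y # ys) = psum g (xs @ [y]) + psum g (y # ys)"
proof (induction xs)
  case (Cons x xs)
  then show ?case by (cases xs) auto
qed simp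

lemma parts_concat:
  assumes "P1 \<in> parts a b" "P2 \<in> parts b c"
  shows "P1 @ tl P2 \<in> parts a c" "psum g (P1 @ tl P2) = psum g P1 + psum g P2"
proof -
  have ne: "P1 \<noteq> []" "P2 \<noteq> []" using assms unfolding parts_def by auto
  obtain T where P2e: "P2 = b # T" using assms(2) ne unfolding parts_def by (cases P2) auto
  have l1: "last P1 = b" using assms(1) unfolding parts_def by simp
  have "P1 = butlast P1 @ [b]" using append_butlast_last_id[OF ne(1)] l1 by simp
  then obtain B where P1e: "P1 = B @ [b]" by blast
  have s1: "sorted (B @ [b])" "sorted (b # T)" using assms P1e P2e unfolding parts_def by auto
  have hB: "hd (B @ [b]) = a" using assms(1) P1e unfolding parts_def by simp
  have lT: "last (b # T) = c" using assms(2) P2e unfolding parts_def by simp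
  have "sorted (B @ [b] @ T)" using s1 by (simp add: sorted_append) (meson order_trans)
  moreover have "hd (B @ [b] @ T) = a" using hB by (cases B) auto
  moreover have "last (B @ [b] @ T) = c" using lT by (cases T) auto
  ultimately show "P1 @ tl P2 \<in> parts a c" unfolding parts_def P1e P2e by simp
  show "psum g (P1 @ tl P2) = psum g P1 + psum g P2"
    unfolding P1e P2e using psum_append[of g B b T] by simp
qed

lemma seg_superadd:
  assumes "a \<le> b" "b \<le> c"
  shows "seg_length g a b + seg_length g b c \<le> seg_length g a c"
proof -
  have "seg_length g a b + seg_length g b c
      = (SUP P1\<in>parts a b. SUP P2\<in>parts b c. ennreal (psum g P1) + ennreal (psum g P2))"
    unfolding seg_def2
  proof -
    have "(SUP P1\<in>parts a b. ennreal (psum g P1)) + (SUP P2\<in>parts b c. ennreal (psum g P2))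
        = (SUP P1\<in>parts a b. ennreal (psum g P1) + (SUP P2\<in>parts b c. ennreal (psum g P2)))"
      by (rule ennreal_SUP_add_left[symmetric]) (simp add: parts_ne assms)
    also have "\<dots> = (SUP P1\<in>parts a b. SUP P2\<in>parts b c. ennreal (psum g P1) + ennreal (psum g P2))"
      by (rule SUP_cong[OF refl], rule ennreal_SUP_add_right) (simp add: parts_ne assms)
    finally show "(SUP P1\<in>parts a b. ennreal (psum g P1)) + (SUP P2\<in>parts b c. ennreal (psum g P2))
        = (SUP P1\<in>parts a b. SUP P2\<in>parts b c. ennreal (psum g P1) + ennreal (psum g P2))" .
  qed
  also have "\<dots> \<le> seg_length g a c"
  proof (intro SUP_least)
    fix P1 P2 assume "P1 \<in> parts a b" "P2 \<in> parts b c"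
    then show "ennreal (psum g P1) + ennreal (psum g P2) \<le> seg_length g a c"
    proof -
      assume h: "P1 \<in> parts a b" "P2 \<in> parts b c"
      have "ennreal (psum g P1) + ennreal (psum g P2) = ennreal (psum g (P1 @ tl P2))"
        unfolding parts_concat(2)[OF h] by (rule ennreal_plus[symmetric]; rule psum_nonneg)
      also have "\<dots> \<le> seg_length g a c" by (rule seg_upper[OF parts_concat(1)[OF h]])
      finally show ?thesis .
    qed
  qed
  finally show ?thesis .
qed

lemma seg_prepend:
  assumes "a \<le> p" "p \<le> b"
  shows "ennreal (dist (g a) (g p)) + seg_length g p b \<le> seg_length g a b"
  using seg_superadd[OF assms, of g] seg_ge_dist[OF assms(1), of g]
  by (meson add_right_mono order_trans)

lemma seg_subadd_aux:
  assumes "P \<in> parts a c" "a \<le> b" "b \<le> c"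
  shows "ennreal (psum g P) \<le> seg_length g a b + seg_length g b c"
  using assms
proof (induction P arbitrary: a)
  case Nil
  then show ?case unfolding parts_def by simp
next
  case (Cons x rest)
  have xa: "x = a" using Cons.prems unfolding parts_def by simp
  show ?case
  proof (cases rest)
    case Nil
    then have "a = c" using Cons.prems xa unfolding parts_def by simp
    then show ?thesis using Nil by simp
  next
    case (Cons p rest')
    have pr: "rest \<in> parts p c" using Cons.prems(1) Cons unfolding parts_def by auto
    have pa: "a \<le> p" using Cons.prems(1) Cons xa parts_mem[OF Cons.prems(1), of p] by auto
    have psum_eq: "ennreal (psum g (x # rest)) = ennreal (dist (g a) (g p)) + ennreal (psum g rest)"
    proof -
      have "psum g (x # rest) = dist (g a) (g p) + psum g rest" using Cons xa by simp
      then show ?thesis by (simp only:) (rule ennreal_plus; simp add: psum_nonneg)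
    qed
    show ?thesis
    proof (cases "p \<le> b")
      case True
      have "ennreal (psum g (x # rest)) \<le> ennreal (dist (g a) (g p)) + (seg_length g p b + seg_length g b c)"
        using psum_eq Cons.IH[OF pr True Cons.prems(3)] by (simp add: add_left_mono)
      also have "\<dots> = (ennreal (dist (g a) (g p)) + seg_length g p b) + seg_length g b c"
        by (simp add: add.assoc)
      also have "\<dots> \<le> seg_length g a b + seg_length g b c"
        using seg_prepend[OF pa True, of g] by (simp add: add_right_mono)
      finally show ?thesis .
    next
      case False
      have "ennreal (psum g (x # rest)) \<le> ennreal (dist (g a) (g b)) + (ennreal (dist (g b) (g p)) + ennreal (psum g rest))"
      proof -
        have t: "ennreal (dist (g a) (g p)) \<le> ennreal (dist (g a) (g b)) + ennreal (dist (g b) (g p))"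
        proof -
          have "ennreal (dist (g a) (g p)) \<le> ennreal (dist (g a) (g b) + dist (g b) (g p))"
            by (rule ennreal_leI, rule dist_triangle)
          then show ?thesis by (simp only: ennreal_plus[OF zero_le_dist zero_le_dist])
        qed
        have "ennreal (psum g (x # rest)) \<le> (ennreal (dist (g a) (g b)) + ennreal (dist (g b) (g p))) + ennreal (psum g rest)"
          unfolding psum_eq by (rule add_right_mono[OF t])
        then show ?thesis by (simp only: add.assoc)
      qed
      also have "\<dots> \<le> seg_length g a b + seg_length g b c"
      proof (rule add_mono)
        show "ennreal (dist (g a) (g b)) \<le> seg_length g a b" using seg_ge_dist[OF Cons.prems(2)] .
        have "p \<le> c" using parts_le[OF pr] .
        have "ennreal (dist (g b) (g p)) + ennreal (psum g rest) \<le> ennreal (dist (g b) (g p)) + seg_length g p c"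
          using seg_upper[OF pr] by (simp add: add_left_mono)
        also have "\<dots> \<le> seg_length g b c" using seg_prepend[of b p c g] False \<open>p \<le> c\<close> by simp
        finally show "ennreal (dist (g b) (g p)) + ennreal (psum g rest) \<le> seg_length g b c" .
      qed
      finally show ?thesis .
    qed
  qed
qed

lemma seg_add:
  assumes "a \<le> b" "b \<le> c"
  shows "seg_length g a c = seg_length g a b + seg_length g b c"
proof (rule antisym)
  show "seg_length g a c \<le> seg_length g a b + seg_length g b c"
    unfolding seg_def2[of g a c] using seg_subadd_aux[OF _ assms] by (blast intro: SUP_least)
qed (rule seg_superadd[OF assms])

lemma seg_mono:
  assumes "a' \<le> a" "b \<le> b'"
  shows "seg_length g a b \<le> seg_length g a' b'"
proof (cases "a \<le> b")
  case True
  have "seg_length g a' b' = seg_length g a' a + (seg_length g a b + seg_length g b b')"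
    using seg_add[of a' a b' g] seg_add[of a b b' g] assms True by simp
  then show ?thesis
    by (simp only:) (rule add_increasing[OF zero_le], rule add_increasing2[OF zero_le order_refl])
next
  case False
  then show ?thesis by (simp add: seg_empty)
qed

lemma psum_map: "psum g (map h ts) = psum (\<lambda>t. g (h t)) ts"
  by (induction ts rule: induct_list012) auto

lemma parts_map:
  assumes "m > 0" "ts \<in> parts a b"
  shows "map (\<lambda>t. m * t + k) ts \<in> parts (m * a + k) (m * b + k)"
proof -
  have "sorted (map (\<lambda>t. m * t + k) ts)"
    using assms unfolding parts_def
    by (intro sorted_map_mono) (auto simp: mono_on_def)
  then show ?thesis using assms unfolding parts_def by (simp add: hd_map last_map)
qed

lemma parts_affine:
  assumes "m > 0"
  shows "parts (m * a + k) (m * b + k) = map (\<lambda>t. m * t + k) ` parts a b"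
proof
  show "map (\<lambda>t. m * t + k) ` parts a b \<subseteq> parts (m * a + k) (m * b + k)"
    using parts_map[OF assms] by blast
  show "parts (m * a + k) (m * b + k) \<subseteq> map (\<lambda>t. m * t + k) ` parts a b"
  proof
    fix Q assume Q: "Q \<in> parts (m * a + k) (m * b + k)"
    have m1: "1/m > 0" using assms by simp
    have "map (\<lambda>t. (1/m) * t + (- k / m)) Q \<in> parts ((1/m) * (m * a + k) + (- k / m)) ((1/m) * (m * b + k) + (- k / m))"
      by (rule parts_map[OF m1 Q])
    moreover have "(1/m) * (m * a + k) + (- k / m) = a" "(1/m) * (m * b + k) + (- k / m) = b"
      using assms by (auto simp: field_simps)
    moreover have "map (\<lambda>t. m * t + k) (map (\<lambda>t. (1/m) * t + (- k / m)) Q) = Q"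
      using assms by (simp add: map_idI field_simps)
    ultimately show "Q \<in> map (\<lambda>t. m * t + k) ` parts a b" by (metis image_eqI)
  qed
qed

lemma seg_affine:
  assumes "m \<ge> 0"
  shows "seg_length (\<lambda>t. g (m * t + k)) a b = seg_length g (m * a + k) (m * b + k)"
proof (cases "m = 0")
  case True
  show ?thesis
  proof (cases "a \<le> b")
    case True
    have "seg_length (\<lambda>t. g (m * t + k)) a b = 0"
      unfolding seg_def2 using \<open>m = 0\<close> by (simp add: psum_const[of _ _ a] parts_ne True)
    then show ?thesis using \<open>m = 0\<close> by (simp add: seg_refl)
  next
    case False
    then show ?thesis using \<open>m = 0\<close> by (simp add: seg_refl seg_empty)
  qed
next
  case False
  then have m: "m > 0" using assms by simp
  have "seg_length g (m * a + k) (m * b + k) = (SUP ts\<in>map (\<lambda>t. m * t + k) ` parts a b. ennreal (psum g ts))"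
    unfolding seg_def2 parts_affine[OF m] ..
  also have "\<dots> = (SUP ts\<in>parts a b. ennreal (psum g (map (\<lambda>t. m * t + k) ts)))"
    by (simp add: image_comp)
  also have "\<dots> = seg_length (\<lambda>t. g (m * t + k)) a b"
    unfolding seg_def2 psum_map ..
  finally show ?thesis by simp
qed

lemma seg_subpath:
  assumes "u \<le> v"
  shows "seg_length (subpath u v g) a b = seg_length g ((v - u) * a + u) ((v - u) * b + u)"
  unfolding subpath_def using seg_affine[of "v - u" g u a b] assms by simp

lemma seg_join1:
  assumes "a \<le> b" "b \<le> 1/2"
  shows "seg_length (g1 +++ g2) a b = seg_length g1 (2 * a) (2 * b)"
proof -
  have "seg_length (g1 +++ g2) a b = seg_length (\<lambda>t. g1 (2 * t + 0)) a b"
    by (rule seg_cong) (use assms in \<open>auto simp: joinpaths_def\<close>)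
  also have "\<dots> = seg_length g1 (2 * a) (2 * b)" using seg_affine[of 2 g1 0 a b] by simp
  finally show ?thesis .
qed

lemma seg_join2:
  assumes "1/2 \<le> a" "a \<le> b" "g1 1 = g2 0"
  shows "seg_length (g1 +++ g2) a b = seg_length g2 (2 * a - 1) (2 * b - 1)"
proof -
  have "seg_length (g1 +++ g2) a b = seg_length (\<lambda>t. g2 (2 * t + (-1))) a b"
  proof (rule seg_cong)
    fix t assume "a \<le> t" "t \<le> b"
    then show "(g1 +++ g2) t = g2 (2 * t + (-1))"
    proof (cases "t = 1/2")
      case True
      show ?thesis unfolding True joinpaths_def using assms(3) by simp
    next
      case False
      then show ?thesis using assms \<open>a \<le> t\<close> by (auto simp: joinpaths_def)
    qed
  qed
  also have "\<dots> = seg_length g2 (2 * a - 1) (2 * b - 1)" using seg_affine[of 2 g2 "-1" a b] by simp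
  finally show ?thesis .
qed

lemma seg_join:
  assumes "g1 1 = g2 0"
  shows "seg_length (g1 +++ g2) 0 1 = seg_length g1 0 1 + seg_length g2 0 1"
  using seg_add[of 0 "1/2" 1 "g1 +++ g2"] seg_join1[of 0 "1/2" g1 g2] seg_join2[of "1/2" 1 g1 g2] assms
  by simp

lemma C1_aux:
  assumes "a # rest \<in> parts a c" "a \<le> s" "s \<le> c" "\<forall>x\<in>set rest. x = a \<or> s \<le> x"
  shows "ennreal (psum g (a # rest)) \<le> ennreal (dist (g a) (g s)) + seg_length g s c"
  using assms
proof (induction rest)
  case Nil
  then show ?case by simp
next
  case (Cons p rest')
  show ?case
  proof (cases "p = a")
    case True
    have "a # rest' \<in> parts a c" using Cons.prems(1) True unfolding parts_def by auto
    then have "ennreal (psum g (a # rest')) \<le> ennreal (dist (g a) (g s)) + seg_length g s c"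
      using Cons.IH Cons.prems by auto
    then show ?thesis using True by (cases rest') auto
  next
    case False
    then have sp: "s \<le> p" using Cons.prems(4) by auto
    have pr: "p # rest' \<in> parts p c" using Cons.prems(1) unfolding parts_def by auto
    have pc: "p \<le> c" using parts_le[OF pr] .
    have e: "ennreal (psum g (a # p # rest')) = ennreal (dist (g a) (g p)) + ennreal (psum g (p # rest'))"
      by (simp add: psum_nonneg)
    have t: "ennreal (dist (g a) (g p)) \<le> ennreal (dist (g a) (g s)) + ennreal (dist (g s) (g p))"
    proof -
      have "ennreal (dist (g a) (g p)) \<le> ennreal (dist (g a) (g s) + dist (g s) (g p))"
        by (rule ennreal_leI, rule dist_triangle)
      then show ?thesis by (simp only: ennreal_plus[OF zero_le_dist zero_le_dist])
    qed
    have "ennreal (psum g (a # p # rest')) \<le> ennreal (dist (g a) (g s)) + (ennreal (dist (g s) (g p)) + seg_length g p c)"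
      unfolding e using add_mono[OF t seg_upper[OF pr]] by (simp add: add.assoc)
    also have "\<dots> \<le> ennreal (dist (g a) (g s)) + seg_length g s c"
      by (rule add_left_mono, rule seg_prepend[OF sp pc])
    finally show ?thesis .
  qed
qed

lemma C2_aux:
  assumes "P \<in> parts a c" "a \<le> s" "s \<le> c" "\<forall>x\<in>set P. x = c \<or> x \<le> s"
  shows "ennreal (psum g P) \<le> seg_length g a s + ennreal (dist (g s) (g c))"
  using assms
proof (induction P arbitrary: a)
  case Nil
  then show ?case unfolding parts_def by simp
next
  case (Cons x rest)
  have xa: "x = a" using Cons.prems unfolding parts_def by simp
  show ?case
  proof (cases rest)
    case Nil
    then show ?thesis by simp
  next
    case (Cons p rest')
    have pr: "rest \<in> parts p c" using Cons.prems(1) \<open>rest = p # rest'\<close> unfolding parts_def by auto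
    have ap: "a \<le> p" using parts_mem[OF Cons.prems(1), of p] \<open>rest = p # rest'\<close> by simp
    have e: "ennreal (psum g (x # rest)) = ennreal (dist (g a) (g p)) + ennreal (psum g rest)"
      using xa \<open>rest = p # rest'\<close> by (simp add: psum_nonneg)
    show ?thesis
    proof (cases "p \<le> s")
      case True
      have "ennreal (psum g rest) \<le> seg_length g p s + ennreal (dist (g s) (g c))"
        using Cons.IH[OF pr True Cons.prems(3)] Cons.prems(4) by simp
      then have "ennreal (psum g (x # rest)) \<le> (ennreal (dist (g a) (g p)) + seg_length g p s) + ennreal (dist (g s) (g c))"
        unfolding e by (metis add.assoc add_left_mono)
      also have "\<dots> \<le> seg_length g a s + ennreal (dist (g s) (g c))"
        by (rule add_right_mono, rule seg_prepend[OF ap True])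
      finally show ?thesis .
    next
      case False
      then have pc: "p = c" using Cons.prems(4) \<open>rest = p # rest'\<close> by auto
      have "psum g rest = 0"
      proof (rule psum_const[of _ _ c])
        fix y assume "y \<in> set rest"
        then show "g y = g c" using parts_mem[OF pr] pc by force
      qed
      then have "ennreal (psum g (x # rest)) = ennreal (dist (g a) (g c))" using e pc by simp
      also have "\<dots> \<le> ennreal (dist (g a) (g s) + dist (g s) (g c))"
        by (rule ennreal_leI, rule dist_triangle)
      also have "\<dots> = ennreal (dist (g a) (g s)) + ennreal (dist (g s) (g c))"
        by (rule ennreal_plus; simp)
      also have "\<dots> \<le> seg_length g a s + ennreal (dist (g s) (g c))"
        by (rule add_right_mono, rule seg_ge_dist[OF Cons.prems(2)])
      finally show ?thesis .
    qed
  qed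
qed

locale rpath =
  fixes g :: "real \<Rightarrow> 'a::real_normed_vector"
  assumes pth: "path g" and fin: "seg_length g 0 1 < \<infinity>"
begin

definition sl :: "real \<Rightarrow> real \<Rightarrow> real" where
  "sl a b = enn2real (seg_length g a b)"

lemma seg_fin: "0 \<le> a \<Longrightarrow> b \<le> 1 \<Longrightarrow> seg_length g a b < \<infinity>"
  using seg_mono[of 0 a b 1 g] fin by (meson le_less_trans)

lemma seg_eq: "0 \<le> a \<Longrightarrow> b \<le> 1 \<Longrightarrow> seg_length g a b = ennreal (sl a b)"
  unfolding sl_def using seg_fin by simp

lemma sl_nonneg: "sl a b \<ge> 0"
  unfolding sl_def by simp

lemma sl_add: "0 \<le> a \<Longrightarrow> a \<le> b \<Longrightarrow> b \<le> c \<Longrightarrow> c \<le> 1 \<Longrightarrow> sl a c = sl a b + sl b c"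
  unfolding sl_def using seg_add[of a b c g] seg_fin
  by (simp add: enn2real_plus)

lemma sl_dist: "0 \<le> a \<Longrightarrow> a \<le> b \<Longrightarrow> b \<le> 1 \<Longrightarrow> dist (g a) (g b) \<le> sl a b"
  using seg_ge_dist[of a b g] seg_eq[of a b] sl_nonneg[of a b] by simp

lemma sl_refl: "sl a a = 0"
  unfolding sl_def by (simp add: seg_refl)

lemma sl_mono: "0 \<le> a' \<Longrightarrow> a' \<le> a \<Longrightarrow> a \<le> b \<Longrightarrow> b \<le> b' \<Longrightarrow> b' \<le> 1 \<Longrightarrow> sl a b \<le> sl a' b'"
  using sl_add[of a' a b'] sl_add[of a b b'] sl_nonneg[of a' a] sl_nonneg[of b b'] by simp

lemma gcont: "continuous_on {0..1} g"
  using pth unfolding path_def .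

lemma RC:
  assumes "0 \<le> t0" "t0 < 1" "\<epsilon> > 0"
  shows "\<exists>h>0. \<forall>t. t0 \<le> t \<and> t \<le> 1 \<and> t < t0 + h \<longrightarrow> sl t0 t < \<epsilon>"
proof (cases "sl t0 1 < \<epsilon>")
  case True
  show ?thesis
  proof (intro exI[of _ 1] conjI allI impI)
    fix t assume t: "t0 \<le> t \<and> t \<le> 1 \<and> t < t0 + 1"
    have "sl t0 t \<le> sl t0 1" by (rule sl_mono) (use t assms in auto)
    then show "sl t0 t < \<epsilon>" using True by simp
  qed simp
next
  case False
  define S where "S = sl t0 1"
  have "ennreal (S - \<epsilon>/2) < seg_length g t0 1"
    using False assms seg_eq[of t0 1] unfolding S_def by (simp add: ennreal_less_iff)
  then obtain P where P: "P \<in> parts t0 1" "ennreal (S - \<epsilon>/2) < ennreal (psum g P)"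
    unfolding seg_def2 less_SUP_iff by blast
  have Pl: "S - \<epsilon>/2 < psum g P" using P(2) False S_def assms by (simp add: ennreal_less_iff)
  obtain h1 where h1: "h1 > 0" "\<forall>x'\<in>{0..1}. dist x' t0 < h1 \<longrightarrow> dist (g x') (g t0) < \<epsilon>/2"
  proof -
    have c: "\<forall>x\<in>{0..1}. \<forall>e>0. \<exists>d>0. \<forall>x'\<in>{0..1}. dist x' x < d \<longrightarrow> dist (g x') (g x) < e"
      using gcont unfolding continuous_on_iff by blast
    have "t0 \<in> {0..1}" "\<epsilon>/2 > 0" using assms by auto
    then show ?thesis using c that by blast
  qed
  define M where "M = insert 1 {x\<in>set P. t0 < x}"
  have Mf: "finite M" "M \<noteq> {}" unfolding M_def by auto
  have mgt: "t0 < Min M" using Mf assms unfolding M_def by (auto simp: Min_gr_iff)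
  define h where "h = min h1 (Min M - t0)"
  have hpos: "h > 0" using h1 mgt unfolding h_def by simp
  obtain rest where Pe: "P = t0 # rest" using P(1) unfolding parts_def by (cases P) auto
  show ?thesis
  proof (intro exI conjI allI impI)
    show "h > 0" by (rule hpos)
    fix t assume t: "t0 \<le> t \<and> t \<le> 1 \<and> t < t0 + h"
    have all: "\<forall>x\<in>set rest. x = t0 \<or> t \<le> x"
    proof
      fix x assume x: "x \<in> set rest"
      then have xr: "t0 \<le> x" "x \<le> 1" using parts_mem[OF P(1), of x] Pe by auto
      show "x = t0 \<or> t \<le> x"
      proof (cases "x = t0")
        case False
        then have "x \<in> M" using x xr Pe unfolding M_def by auto
        then have "Min M \<le> x" using Mf by simp
        then show ?thesis using t unfolding h_def by auto
      qed simp
    qed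
    have "ennreal (psum g P) \<le> ennreal (dist (g t0) (g t)) + seg_length g t 1"
      unfolding Pe by (rule C1_aux[of t0 rest 1 t g]) (use P(1) Pe t all in simp_all)
    also have "\<dots> = ennreal (dist (g t0) (g t) + sl t 1)"
      using seg_eq[of t 1] t assms by (simp add: sl_nonneg)
    finally have f: "ennreal (psum g P) \<le> ennreal (dist (g t0) (g t) + sl t 1)" .
    have nn: "0 \<le> dist (g t0) (g t) + sl t 1" using sl_nonneg[of t 1] by simp
    have "psum g P \<le> dist (g t0) (g t) + sl t 1" using f ennreal_le_iff[OF nn, of "psum g P"] by blast
    moreover have "dist (g t0) (g t) < \<epsilon>/2"
    proof -
      have "h \<le> h1" unfolding h_def by simp
      then have "dist t t0 < h1" using t by (simp add: dist_real_def)
      then have "dist (g t) (g t0) < \<epsilon>/2" using h1(2) t assms by simp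
      then show ?thesis by (simp add: dist_commute)
    qed
    moreover have "S = sl t0 t + sl t 1" unfolding S_def using sl_add t assms by simp
    ultimately show "sl t0 t < \<epsilon>" using Pl by simp
  qed
qed

lemma LC:
  assumes "0 < t0" "t0 \<le> 1" "\<epsilon> > 0"
  shows "\<exists>h>0. \<forall>t. 0 \<le> t \<and> t \<le> t0 \<and> t0 - h < t \<longrightarrow> sl t t0 < \<epsilon>"
proof (cases "sl 0 t0 < \<epsilon>")
  case True
  show ?thesis
  proof (intro exI[of _ 1] conjI allI impI)
    fix t assume t: "0 \<le> t \<and> t \<le> t0 \<and> t0 - 1 < t"
    have "sl t t0 \<le> sl 0 t0" by (rule sl_mono) (use t assms in auto)
    then show "sl t t0 < \<epsilon>" using True by simp
  qed simp
next
  case False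
  define S where "S = sl 0 t0"
  have "ennreal (S - \<epsilon>/2) < seg_length g 0 t0"
    using False assms seg_eq[of 0 t0] unfolding S_def by (simp add: ennreal_less_iff)
  then obtain P where P: "P \<in> parts 0 t0" "ennreal (S - \<epsilon>/2) < ennreal (psum g P)"
    unfolding seg_def2 less_SUP_iff by blast
  have Pl: "S - \<epsilon>/2 < psum g P" using P(2) False S_def assms by (simp add: ennreal_less_iff)
  obtain h1 where h1: "h1 > 0" "\<forall>x'\<in>{0..1}. dist x' t0 < h1 \<longrightarrow> dist (g x') (g t0) < \<epsilon>/2"
  proof -
    have c: "\<forall>x\<in>{0..1}. \<forall>e>0. \<exists>d>0. \<forall>x'\<in>{0..1}. dist x' x < d \<longrightarrow> dist (g x') (g x) < e"
      using gcont unfolding continuous_on_iff by blast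
    have "t0 \<in> {0..1}" "\<epsilon>/2 > 0" using assms by auto
    then show ?thesis using c that by blast
  qed
  define M where "M = insert 0 {x\<in>set P. x < t0}"
  have Mf: "finite M" "M \<noteq> {}" unfolding M_def by auto
  have mlt: "Max M < t0" using Mf assms unfolding M_def by (auto simp: Max_less_iff)
  define h where "h = min h1 (t0 - Max M)"
  have hpos: "h > 0" using h1 mlt unfolding h_def by simp
  show ?thesis
  proof (intro exI conjI allI impI)
    show "h > 0" by (rule hpos)
    fix t assume t: "0 \<le> t \<and> t \<le> t0 \<and> t0 - h < t"
    have all: "\<forall>x\<in>set P. x = t0 \<or> x \<le> t"
    proof
      fix x assume x: "x \<in> set P"
      then have xr: "0 \<le> x" "x \<le> t0" using parts_mem[OF P(1), of x] by auto
      show "x = t0 \<or> x \<le> t"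
      proof (cases "x = t0")
        case False
        then have "x \<in> M" using x xr unfolding M_def by auto
        then have "x \<le> Max M" using Mf by simp
        then show ?thesis using t unfolding h_def by auto
      qed simp
    qed
    have "ennreal (psum g P) \<le> seg_length g 0 t + ennreal (dist (g t) (g t0))"
      by (rule C2_aux[of P 0 t0 t g]) (use P(1) t all in simp_all)
    also have "\<dots> = ennreal (sl 0 t + dist (g t) (g t0))"
      using seg_eq[of 0 t] t assms by (simp add: sl_nonneg)
    finally have f: "ennreal (psum g P) \<le> ennreal (sl 0 t + dist (g t) (g t0))" .
    have nn: "0 \<le> sl 0 t + dist (g t) (g t0)" using sl_nonneg[of 0 t] by simp
    have "psum g P \<le> sl 0 t + dist (g t) (g t0)" using f ennreal_le_iff[OF nn, of "psum g P"] by blast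
    moreover have "dist (g t) (g t0) < \<epsilon>/2"
    proof -
      have "h \<le> h1" unfolding h_def by simp
      then have "dist t t0 < h1" using t by (simp add: dist_real_def)
      then show "dist (g t) (g t0) < \<epsilon>/2" using h1(2) t assms by simp
    qed
    moreover have "S = sl 0 t + sl t t0" unfolding S_def using sl_add t assms by simp
    ultimately show "sl t t0 < \<epsilon>" using Pl by simp
  qed
qed

lemma RC': "0 \<le> t0 \<Longrightarrow> t0 \<le> 1 \<Longrightarrow> \<epsilon> > 0 \<Longrightarrow> \<exists>h>0. \<forall>t. t0 \<le> t \<and> t \<le> 1 \<and> t < t0 + h \<longrightarrow> sl t0 t < \<epsilon>"
  using RC[of t0 \<epsilon>] sl_refl by (cases "t0 = 1") (auto intro: exI[of _ 1])

lemma LC': "0 \<le> t0 \<Longrightarrow> t0 \<le> 1 \<Longrightarrow> \<epsilon> > 0 \<Longrightarrow> \<exists>h>0. \<forall>t. 0 \<le> t \<and> t \<le> t0 \<and> t0 - h < t \<longrightarrow> sl t t0 < \<epsilon>"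
  using LC[of t0 \<epsilon>] sl_refl by (cases "t0 = 0") (auto intro: exI[of _ 1])

lemma sl_cont: "continuous_on {0..1} (\<lambda>t. sl 0 t)"
  unfolding continuous_on_iff
proof (intro ballI allI impI)
  fix x :: real and e :: real assume x: "x \<in> {0..1}" and e: "e > 0"
  obtain hR where hR: "hR > 0" "\<forall>t. x \<le> t \<and> t \<le> 1 \<and> t < x + hR \<longrightarrow> sl x t < e"
    using RC'[of x e] x e by auto
  obtain hL where hL: "hL > 0" "\<forall>t. 0 \<le> t \<and> t \<le> x \<and> x - hL < t \<longrightarrow> sl t x < e"
    using LC'[of x e] x e by auto
  show "\<exists>d>0. \<forall>x'\<in>{0..1}. dist x' x < d \<longrightarrow> dist (sl 0 x') (sl 0 x) < e"
  proof (intro exI conjI ballI impI)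
    show "min hR hL > 0" using hR hL by simp
    fix x' assume x': "x' \<in> {0..1}" "dist x' x < min hR hL"
    have xr: "0 \<le> x" "x \<le> 1" using x by auto
    have xr': "0 \<le> x'" "x' \<le> 1" using x'(1) by auto
    have ad: "\<bar>x' - x\<bar> < hR" "\<bar>x' - x\<bar> < hL" using x'(2) by (auto simp: dist_real_def)
    show "dist (sl 0 x') (sl 0 x) < e"
    proof (cases "x \<le> x'")
      case True
      have eq: "sl 0 x' = sl 0 x + sl x x'" by (rule sl_add) (use True xr xr' in auto)
      have "x' < x + hR" using ad(1) True by linarith
      then have "sl x x' < e" using hR(2) True xr' by blast
      then show ?thesis unfolding dist_real_def eq using sl_nonneg[of x x'] by simp
    next
      case False
      have eq: "sl 0 x = sl 0 x' + sl x' x" by (rule sl_add) (use False xr xr' in auto)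
      have "x - hL < x'" using ad(2) False by linarith
      then have "sl x' x < e" using hL(2) False xr' by auto
      then show ?thesis unfolding dist_real_def eq using sl_nonneg[of x' x] by simp
    qed
  qed
qed

lemma arclen_eq: "0 \<le> t \<Longrightarrow> t \<le> 1 \<Longrightarrow> arclen_fun g t = sl 0 t"
  unfolding arclen_fun_def sl_def by simp

lemma arclen_cont: "continuous_on UNIV (arclen_fun g)"
proof -
  have "continuous_on UNIV ((\<lambda>t. sl 0 t) \<circ> (\<lambda>t. max 0 (min 1 t)))"
  proof -
    have c1: "continuous_on UNIV (\<lambda>t::real. max 0 (min 1 t))" by (intro continuous_intros)
    have c2: "continuous_on ((\<lambda>t::real. max 0 (min 1 t)) ` UNIV) (\<lambda>t. sl 0 t)"
      by (rule continuous_on_subset[OF sl_cont]) auto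
    show ?thesis by (rule continuous_on_compose[OF c1 c2])
  qed
  moreover have "arclen_fun g = (\<lambda>t. sl 0 t) \<circ> (\<lambda>t. max 0 (min 1 t))"
    unfolding arclen_fun_def sl_def by auto
  ultimately show ?thesis by simp
qed

lemma arclen_mono: "x \<le> y \<Longrightarrow> arclen_fun g x \<le> arclen_fun g y"
  unfolding arclen_fun_def sl_def[symmetric]
  by (rule sl_mono) auto

lemma arclen_diff: "0 \<le> a \<Longrightarrow> a \<le> b \<Longrightarrow> b \<le> 1 \<Longrightarrow> arclen_fun g b - arclen_fun g a = sl a b"
  using sl_add[of 0 a b] arclen_eq by simp

end

lemma bdist_lip: "bdist G x \<le> bdist G y + dist x y"
  unfolding bdist_def by (rule infdist_triangle)

lemma ennreal_half_step: "ennreal (real k / 2) + ennreal (1/2) = ennreal (real (Suc k) / 2)"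
proof -
  have e: "real (Suc k) / 2 = real k / 2 + 1/2" by (simp add: add_divide_distrib)
  show ?thesis unfolding e by (rule ennreal_plus[symmetric]) auto
qed

locale qpath = rpath g for g :: "real \<Rightarrow> 'a::euclidean_space" +
  fixes G :: "'a set"
  assumes img: "path_image g \<subseteq> G" and pos: "\<And>z. z \<in> G \<Longrightarrow> bdist G z > 0"
begin

abbreviation "F \<equiv> arclen_fun g"
abbreviation "\<mu> \<equiv> interval_measure (arclen_fun g)"

definition I :: "real \<Rightarrow> real \<Rightarrow> ennreal" where
  "I a b = (\<integral>\<^sup>+ t. ennreal (1 / bdist G (g t)) * indicator {a<..b} t \<partial>\<mu>)"

lemma gin: "0 \<le> t \<Longrightarrow> t \<le> 1 \<Longrightarrow> g t \<in> G"
  using img unfolding path_image_def by auto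

lemma Fcont_at: "continuous (at_right a) F"
  using arclen_cont continuous_on_eq_continuous_at[of UNIV F]
  by (simp add: continuous_at_imp_continuous_at_within)

lemma emeasure_Ioc: "a \<le> b \<Longrightarrow> emeasure \<mu> {a<..b} = ennreal (F b - F a)"
  by (rule emeasure_interval_measure_Ioc) (auto intro: arclen_mono Fcont_at)

definition h :: "real \<Rightarrow> real" where
  "h t = 1 / bdist G (g (max 0 (min 1 t)))"

lemma h_cont: "continuous_on UNIV h"
proof -
  have c1: "continuous_on UNIV (\<lambda>t::real. max 0 (min 1 t))" by (intro continuous_intros)
  have c2: "continuous_on ((\<lambda>t::real. max 0 (min 1 t)) ` UNIV) g"
    by (rule continuous_on_subset[OF gcont]) auto
  have c3: "continuous_on UNIV (\<lambda>t. g (max 0 (min 1 t)))"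
    using continuous_on_compose[OF c1 c2] by (simp add: o_def)
  have c4: "continuous_on UNIV (\<lambda>t. bdist G (g (max 0 (min 1 t))))"
    unfolding bdist_def by (intro continuous_on_infdist c3)
  have nz: "bdist G (g (max 0 (min 1 t))) \<noteq> 0" for t
    using pos[OF gin, of "max 0 (min 1 t)"] by auto
  show ?thesis unfolding h_def
    by (intro continuous_on_divide continuous_on_const c4) (use nz in auto)
qed

lemma meas: "(\<lambda>t. ennreal (1 / bdist G (g t)) * indicator {a<..b} t) \<in> borel_measurable \<mu>"
  if "0 \<le> a" "b \<le> 1"
proof -
  have eq: "(\<lambda>t. ennreal (1 / bdist G (g t)) * indicator {a<..b} t) = (\<lambda>t. ennreal (h t) * indicator {a<..b} t)"
  proof
    fix t show "ennreal (1 / bdist G (g t)) * indicator {a<..b} t = ennreal (h t) * indicator {a<..b} t"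
    proof (cases "t \<in> {a<..b}")
      case True
      then have "max 0 (min 1 t) = t" using that by auto
      then show ?thesis unfolding h_def by simp
    qed simp
  qed
  have hm: "h \<in> borel_measurable borel" by (rule borel_measurable_continuous_onI[OF h_cont])
  have "(\<lambda>t. ennreal (h t) * indicator {a<..b} t) \<in> borel_measurable \<mu>"
  proof (rule borel_measurable_times_ennreal)
    have "(\<lambda>t. ennreal (h t)) \<in> borel_measurable borel" by (rule measurable_compose[OF hm measurable_ennreal])
    then show "(\<lambda>t. ennreal (h t)) \<in> borel_measurable \<mu>"
      by (subst measurable_cong_sets[of \<mu> borel borel borel]) auto
    show "indicator {a<..b} \<in> borel_measurable \<mu>" by (rule borel_measurable_indicator) simp
  qed
  then show ?thesis unfolding eq .
qed

lemma I_add: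
  assumes "0 \<le> a" "a \<le> b" "b \<le> c" "c \<le> 1"
  shows "I a c = I a b + I b c"
proof -
  have "I a c = (\<integral>\<^sup>+ t. ennreal (1 / bdist G (g t)) * indicator {a<..b} t + ennreal (1 / bdist G (g t)) * indicator {b<..c} t \<partial>\<mu>)"
    unfolding I_def
  proof (rule nn_integral_cong)
    fix t show "ennreal (1 / bdist G (g t)) * indicator {a<..c} t = ennreal (1 / bdist G (g t)) * indicator {a<..b} t + ennreal (1 / bdist G (g t)) * indicator {b<..c} t"
      using assms by (auto simp: indicator_def)
  qed
  also have "\<dots> = I a b + I b c"
    unfolding I_def by (rule nn_integral_add) (use assms meas in auto)
  finally show ?thesis .
qed

lemma I_mono:
  assumes "a' \<le> a" "b \<le> b'"
  shows "I a b \<le> I a' b'"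
  unfolding I_def
  by (rule nn_integral_mono) (use assms in \<open>auto simp: indicator_def\<close>)

lemma I_le_qh: "0 \<le> a \<Longrightarrow> b \<le> 1 \<Longrightarrow> I a b \<le> qh_length G g"
  unfolding I_def qh_length_def
  by (rule nn_integral_mono) (auto simp: indicator_def)

lemma KL:
  assumes "0 \<le> a" "a \<le> b" "b \<le> 1" "M > 0" "\<And>t. a \<le> t \<Longrightarrow> t \<le> b \<Longrightarrow> bdist G (g t) \<le> M"
  shows "ennreal ((F b - F a) / M) \<le> I a b"
proof -
  have "ennreal ((F b - F a) / M) = ennreal (1/M) * emeasure \<mu> {a<..b}"
    using emeasure_Ioc[OF assms(2)] assms arclen_mono[OF assms(2)]
    by (simp add: ennreal_mult[symmetric] del: ennreal_mult)
  also have "\<dots> = (\<integral>\<^sup>+ t. ennreal (1/M) * indicator {a<..b} t \<partial>\<mu>)"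
    by (rule nn_integral_cmult_indicator[symmetric]) simp
  also have "\<dots> \<le> I a b"
    unfolding I_def
  proof (rule nn_integral_mono)
    fix t
    show "ennreal (1/M) * indicator {a<..b} t \<le> ennreal (1 / bdist G (g t)) * indicator {a<..b} t"
    proof (cases "t \<in> {a<..b}")
      case True
      then have tt: "a \<le> t" "t \<le> b" by auto
      have p: "bdist G (g t) > 0" using pos[OF gin] tt assms by auto
      have "1/M \<le> 1 / bdist G (g t)"
        using assms(5)[OF tt] p by (simp add: frac_le)
      then show ?thesis using True by (simp add: ennreal_leI)
    qed simp
  qed
  finally show ?thesis .
qed

end

context qpath
begin

lemma F0: "F 0 = 0"
  using arclen_eq[of 0] sl_refl by simp

lemma F_dist: "0 \<le> a \<Longrightarrow> a \<le> b \<Longrightarrow> b \<le> 1 \<Longrightarrow> dist (g a) (g b) \<le> F b - F a"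
  using arclen_diff sl_dist by simp

lemma IVT_F:
  assumes "0 \<le> a" "a \<le> b" "b \<le> 1" "F a \<le> y" "y \<le> F b"
  shows "\<exists>t. a \<le> t \<and> t \<le> b \<and> F t = y"
  by (rule IVT') (use assms continuous_on_subset[OF arclen_cont] in auto)

lemma len_iter:
  "\<forall>t. 0 \<le> t \<longrightarrow> t \<le> 1 \<longrightarrow> (2^k - 1) * bdist G (g 0) \<le> F t \<longrightarrow> ennreal (real k / 2) \<le> I 0 t"
proof (induction k)
  case 0
  then show ?case by simp
next
  case (Suc k)
  define D where "D = bdist G (g 0)"
  have Dpos: "D > 0" unfolding D_def using pos[OF gin, of 0] by simp
  show ?case
  proof (intro allI impI)
    fix t :: real assume t: "0 \<le> t" "t \<le> 1" and Ft: "(2 ^ Suc k - 1) * bdist G (g 0) \<le> F t"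
    have Ft': "(2 ^ Suc k - 1) * D \<le> F t" using Ft unfolding D_def .
    have pk: "(1::real) \<le> 2^k" by simp
    have le1: "(2^k - 1) * D \<le> (2 ^ Suc k - 1) * D" using Dpos pk by (intro mult_right_mono) auto
    have ge0: "0 \<le> (2^k - 1) * D" using Dpos pk by simp
    obtain t' where t': "0 \<le> t'" "t' \<le> t" "F t' = (2^k - 1) * D"
      using IVT_F[of 0 t "(2^k - 1) * D"] t F0 ge0 le1 Ft' by auto
    obtain t'' where t'': "t' \<le> t''" "t'' \<le> t" "F t'' = (2 ^ Suc k - 1) * D"
      using IVT_F[of t' t "(2 ^ Suc k - 1) * D"] t t' le1 Ft' by auto
    have Mpos: "(2 ^ Suc k) * D > 0" using Dpos by simp
    have bd: "bdist G (g \<tau>) \<le> (2 ^ Suc k) * D" if "t' \<le> \<tau>" "\<tau> \<le> t''" for \<tau>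
    proof -
      have "bdist G (g \<tau>) \<le> D + dist (g 0) (g \<tau>)"
        using bdist_lip[of G "g \<tau>" "g 0"] unfolding D_def by (simp add: dist_commute)
      also have "\<dots> \<le> D + (F \<tau> - F 0)" using F_dist[of 0 \<tau>] that t' t'' t by simp
      also have "\<dots> \<le> D + F t''" using arclen_mono[OF that(2)] F0 by simp
      also have "\<dots> = (2 ^ Suc k) * D" using t'' by (simp add: algebra_simps)
      finally show ?thesis .
    qed
    have kl: "ennreal ((F t'' - F t') / ((2 ^ Suc k) * D)) \<le> I t' t''"
      by (rule KL) (use t' t'' t Mpos bd in auto)
    have eqh: "(F t'' - F t') / ((2 ^ Suc k) * D) = 1/2"
      using t' t'' Dpos by (simp add: field_simps)
    have h1: "ennreal (1/2) \<le> I t' t''" using kl unfolding eqh .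
    have h0: "ennreal (real k / 2) \<le> I 0 t'"
      using Suc.IH t' t unfolding D_def by auto
    have "ennreal (real (Suc k) / 2) = ennreal (real k / 2) + ennreal (1/2)"
      by (rule ennreal_half_step[symmetric])
    also have "\<dots> \<le> I 0 t' + I t' t''" by (rule add_mono[OF h0 h1])
    also have "\<dots> = I 0 t''" using I_add[of 0 t' t''] t' t'' t by simp
    also have "\<dots> \<le> I 0 t" by (rule I_mono) (use t'' in auto)
    finally show "ennreal (real (Suc k) / 2) \<le> I 0 t" .
  qed
qed

lemma len_bound:
  assumes "qh_length G g < ennreal (real k / 2)"
  shows "F 1 < 2^k * bdist G (g 0)"
proof (rule ccontr)
  assume "\<not> F 1 < 2^k * bdist G (g 0)"
  then have "(2^k - 1) * bdist G (g 0) \<le> F 1"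
    using pos[OF gin, of 0] by (simp add: algebra_simps)
  then have "ennreal (real k / 2) \<le> I 0 1" using len_iter[of k] by auto
  also have "\<dots> \<le> qh_length G g" by (rule I_le_qh) auto
  finally show False using assms by simp
qed

lemma low_iter:
  assumes ts: "0 \<le> ts" "ts \<le> 1"
  shows "\<forall>s. 0 \<le> s \<longrightarrow> s \<le> ts \<longrightarrow> (2^k - 1) * bdist G (g ts) \<le> F ts - F s \<longrightarrow> ennreal (real k / 2) \<le> I s ts"
proof (induction k)
  case 0
  then show ?case by simp
next
  case (Suc k)
  define e where "e = bdist G (g ts)"
  have epos: "e > 0" unfolding e_def using pos[OF gin] ts by simp
  show ?case
  proof (intro allI impI)
    fix s :: real assume s: "0 \<le> s" "s \<le> ts" and Fs: "(2 ^ Suc k - 1) * bdist G (g ts) \<le> F ts - F s"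
    have Fs': "(2 ^ Suc k - 1) * e \<le> F ts - F s" using Fs unfolding e_def .
    have pk: "(1::real) \<le> 2^k" by simp
    have le1: "(2^k - 1) * e \<le> (2 ^ Suc k - 1) * e" using epos pk by (intro mult_right_mono) auto
    have ge0: "0 \<le> (2^k - 1) * e" using epos pk by simp
    obtain s' where s': "s \<le> s'" "s' \<le> ts" "F s' = F ts - (2^k - 1) * e"
      using IVT_F[of s ts "F ts - (2^k - 1) * e"] s ts ge0 le1 Fs' by auto
    obtain s'' where s'': "s \<le> s''" "s'' \<le> s'" "F s'' = F ts - (2 ^ Suc k - 1) * e"
      using IVT_F[of s s' "F ts - (2 ^ Suc k - 1) * e"] s s' ts le1 Fs' by auto
    have Mpos: "(2 ^ Suc k) * e > 0" using epos by simp
    have bd: "bdist G (g \<tau>) \<le> (2 ^ Suc k) * e" if "s'' \<le> \<tau>" "\<tau> \<le> s'" for \<tau>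
    proof -
      have "bdist G (g \<tau>) \<le> e + dist (g \<tau>) (g ts)"
        using bdist_lip[of G "g \<tau>" "g ts"] unfolding e_def by simp
      also have "\<dots> \<le> e + (F ts - F \<tau>)" using F_dist[of \<tau> ts] that s' s'' s ts by simp
      also have "\<dots> \<le> e + (F ts - F s'')" using arclen_mono[OF that(1)] by simp
      also have "\<dots> = (2 ^ Suc k) * e" using s'' by (simp add: algebra_simps)
      finally show ?thesis .
    qed
    have kl: "ennreal ((F s' - F s'') / ((2 ^ Suc k) * e)) \<le> I s'' s'"
      by (rule KL) (use s' s'' s ts Mpos bd in auto)
    have eqh: "(F s' - F s'') / ((2 ^ Suc k) * e) = 1/2"
      using s' s'' epos by (simp add: field_simps)
    have h1: "ennreal (1/2) \<le> I s'' s'" using kl unfolding eqh .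
    have h0: "ennreal (real k / 2) \<le> I s' ts"
      using Suc.IH s' s unfolding e_def by auto
    have "ennreal (real (Suc k) / 2) = ennreal (real k / 2) + ennreal (1/2)"
      by (rule ennreal_half_step[symmetric])
    also have "\<dots> \<le> I s'' s' + I s' ts" using add_mono[OF h0 h1] by (simp add: add.commute)
    also have "\<dots> = I s'' ts" using I_add[of s'' s' ts] s' s'' s ts by simp
    also have "\<dots> \<le> I s ts" by (rule I_mono) (use s'' in auto)
    finally show "ennreal (real (Suc k) / 2) \<le> I s ts" .
  qed
qed

lemma low_bound:
  assumes "qh_length G g < ennreal (real k / 2)" "0 \<le> ts" "ts \<le> 1"
  shows "bdist G (g 0) / 2^k \<le> bdist G (g ts)"
proof (rule ccontr)
  define D where "D = bdist G (g 0)"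
  define e where "e = bdist G (g ts)"
  assume "\<not> bdist G (g 0) / 2^k \<le> bdist G (g ts)"
  then have lt: "e * 2^k < D" unfolding D_def e_def by (simp add: field_simps)
  have "D \<le> e + dist (g 0) (g ts)"
    using bdist_lip[of G "g 0" "g ts"] unfolding D_def e_def by simp
  also have "\<dots> \<le> e + (F ts - F 0)" using F_dist[of 0 ts] assms by simp
  finally have "(2^k - 1) * e \<le> F ts - F 0" using lt by (simp add: algebra_simps)
  then have "ennreal (real k / 2) \<le> I 0 ts" using low_iter[OF assms(2,3), of k] assms unfolding e_def by auto
  also have "\<dots> \<le> qh_length G g" by (rule I_le_qh) (use assms in auto)
  finally show False using assms by simp
qed

end

lemma psum_lip:
  assumes "\<And>s t. s \<in> S \<Longrightarrow> t \<in> S \<Longrightarrow> dist (g s) (g t) \<le> L * \<bar>s - t\<bar>"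
  shows "sorted P \<Longrightarrow> P \<noteq> [] \<Longrightarrow> set P \<subseteq> S \<Longrightarrow> psum g P \<le> L * (last P - hd P)"
proof (induction P rule: induct_list012)
  case (3 x y xs)
  have xy: "x \<le> y" using 3 by simp
  have "dist (g x) (g y) \<le> L * \<bar>x - y\<bar>" using assms[of x y] 3 by simp
  moreover have "\<bar>x - y\<bar> = y - x" using xy by simp
  ultimately have "dist (g x) (g y) \<le> L * (y - x)" by simp
  moreover have "psum g (y # xs) \<le> L * (last (y # xs) - y)" using 3 by auto
  ultimately show ?case by (simp add: algebra_simps)
qed auto

lemma seg_lip:
  assumes "\<And>s t. s \<in> {a..b} \<Longrightarrow> t \<in> {a..b} \<Longrightarrow> dist (g s) (g t) \<le> L * \<bar>s - t\<bar>"
  shows "seg_length g a b \<le> ennreal (L * (b - a))"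
  unfolding seg_def2
proof (rule SUP_least)
  fix P assume P: "P \<in> parts a b"
  have "psum g P \<le> L * (last P - hd P)"
  proof (rule psum_lip[OF assms])
    show "sorted P" "P \<noteq> []" using P unfolding parts_def by auto
    show "set P \<subseteq> {a..b}" using parts_mem[OF P] by auto
  qed
  then show "ennreal (psum g P) \<le> ennreal (L * (b - a))" using P unfolding parts_def by (simp add: ennreal_leI)
qed

lemma dist_linepath: "dist (linepath x y s) (linepath x y t) = \<bar>s - t\<bar> * dist x y"
proof -
  have "linepath x y s - linepath x y t = (s - t) *\<^sub>R (y - x)"
    unfolding linepath_def by (simp add: algebra_simps)
  then show ?thesis by (simp add: dist_norm norm_minus_commute)
qed

lemma Hlem:
  fixes m :: ennreal
  assumes "m \<le> ennreal X" "X / C \<le> Y" "C > 0" "0 \<le> X"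
  shows "ennreal (1 / C) * m \<le> ennreal Y"
proof -
  have "ennreal (1 / C) * m \<le> ennreal (1 / C) * ennreal X" by (rule mult_left_mono[OF assms(1)]) simp
  also have "\<dots> = ennreal (X / C)" using assms by (simp add: ennreal_mult[symmetric] del: ennreal_mult)
  also have "\<dots> \<le> ennreal Y" using assms by (simp add: ennreal_leI)
  finally show ?thesis .
qed

lemma bdist_pos:
  fixes G :: "'a::euclidean_space set"
  assumes "open G" "G \<noteq> {}" "G \<noteq> UNIV" "z \<in> G"
  shows "bdist G z > 0"
proof -
  have "frontier G \<noteq> {}" using assms frontier_eq_empty by blast
  moreover have "z \<notin> frontier G" using assms by (simp add: frontier_def interior_open)
  ultimately show ?thesis unfolding bdist_def
    by (intro infdist_pos_not_in_closed) auto
qed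

lemma ball_in:
  fixes G :: "'a::euclidean_space set"
  assumes "z \<in> G" "dist z w < bdist G z"
  shows "w \<in> G"
proof (rule ccontr)
  assume "w \<notin> G"
  have "closed_segment z w \<inter> frontier G \<noteq> {}"
    by (rule connected_Int_frontier) (use assms \<open>w \<notin> G\<close> in auto)
  then obtain p where p: "p \<in> closed_segment z w" "p \<in> frontier G" by blast
  have "dist p z \<le> dist z w" using dist_in_closed_segment[OF p(1)] by simp
  moreover have "bdist G z \<le> dist z p" unfolding bdist_def using p(2) by (rule infdist_le)
  ultimately show False using assms by (simp add: dist_commute)
qed

theorem theorem1p2:
  fixes G :: "'a::euclidean_space set" and \<phi> :: "real \<Rightarrow> real"
  assumes "DIM('a) \<ge> 2"
    and "open G" and "connected G" and "G \<noteq> {}" and "G \<noteq> UNIV"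
    and "strict_mono_on {0..} \<phi>" and "\<exists>\<psi>. homeomorphism {0..} {0..} \<phi> \<psi>" and "\<phi> 0 = 0"
    and "phi_uniform \<phi> G"
    and "twisted_cone G"
  shows "uniform_domain G"
proof -
  have bpos: "\<And>z. z \<in> G \<Longrightarrow> bdist G z > 0" using bdist_pos assms(2,4,5) by blast
  obtain c where c: "c > 0" and cone: "\<forall>x\<in>G. \<forall>y\<in>G. \<exists>g.
      rectifiable_path g \<and> path_image g \<subseteq> G \<and> pathstart g = x \<and> pathfinish g = y \<and>
      (\<forall>t\<in>{0..1}. min (seg_length g 0 t) (seg_length g t 1) \<le> ennreal (c * bdist G (g t)))"
    using assms(10) unfolding twisted_cone_def by blast
  define A where "A = \<phi> (3 * c)"
  have A0: "0 \<le> A"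
    using strict_mono_on_leD[OF assms(6), of 0 "3 * c"] c assms(8) unfolding A_def by simp
  define k where "k = 2 * nat \<lceil>A\<rceil> + 2"
  have kA: "A + 1 \<le> real k / 2"
  proof -
    have "A \<le> real (nat \<lceil>A\<rceil>)" by linarith
    then show ?thesis unfolding k_def by simp
  qed
  define N :: real where "N = 2 ^ k"
  have N1: "N \<ge> 1" unfolding N_def by simp
  define C where "C = (2 + 4 * N) * (c + 1) * N"
  have C_ge: "(2 + 4 * N) \<le> C"
  proof -
    have "1 * 1 \<le> (c + 1) * N" using c N1 by (intro mult_mono) auto
    then have "1 \<le> (c + 1) * N" by simp
    then have "(2 + 4 * N) * 1 \<le> (2 + 4 * N) * ((c + 1) * N)" using N1 by (intro mult_left_mono) auto
    then show ?thesis unfolding C_def by (simp add: mult.assoc)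
  qed
  have C1: "1 \<le> C" "2 \<le> C" using C_ge N1 by auto
  have Cc: "c \<le> C"
  proof -
    have "1 * 1 \<le> (2 + 4 * N) * N" using N1 by (intro mult_mono) auto
    then have "c * 1 \<le> (c + 1) * ((2 + 4 * N) * N)"
      using c N1 by (intro mult_mono) auto
    then show ?thesis unfolding C_def by (simp add: algebra_simps)
  qed
  have Cpos: "C > 0" using C1 by simp
  have Hc: "c * b / C \<le> b" if "b \<ge> 0" for b
  proof -
    have "c * b \<le> C * b" using Cc that by (intro mult_right_mono) auto
    then show ?thesis using Cpos by (simp add: divide_le_eq mult.commute)
  qed
  show ?thesis unfolding uniform_domain_def
  proof (intro exI[of _ C] conjI ballI)
    show "1 \<le> C" by (rule C1(1))
    fix x y assume x: "x \<in> G" and y: "y \<in> G"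
    define r where "r = dist x y"
    define d where "d = min (bdist G x) (bdist G y)"
    have dpos: "d > 0" unfolding d_def using bpos x y by simp
    have r0: "r \<ge> 0" unfolding r_def by simp
    show "\<exists>g. rectifiable_path g \<and> path_image g \<subseteq> G \<and> pathstart g = x \<and> pathfinish g = y \<and>
      path_len g \<le> ennreal (C * dist x y) \<and>
      (\<forall>t\<in>{0..1}. ennreal (bdist G (g t)) \<ge> ennreal (1 / C) * min (seg_length g 0 t) (seg_length g t 1))"
    proof (cases "r \<le> d / 2")
      case True
      define g where "g = linepath x y"
      have segb: "seg_length g a b \<le> ennreal (r * (b - a))" for a b
        by (rule seg_lip) (simp add: g_def dist_linepath r_def mult.commute)
      have pl: "path_len g \<le> ennreal r" using segb[of 0 1] unfolding path_len_def by simp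
      show ?thesis
      proof (intro exI[of _ g] conjI ballI)
        show "rectifiable_path g" unfolding rectifiable_path_def
        proof
          show "path g" by (simp add: g_def)
          show "path_len g < \<infinity>" using pl by (rule le_less_trans) simp
        qed
        show "path_image g \<subseteq> G"
        proof
          fix z assume "z \<in> path_image g"
          then have "z \<in> closed_segment x y" unfolding g_def by simp
          then have "dist z x \<le> r" unfolding r_def using dist_in_closed_segment by blast
          moreover have "d \<le> bdist G x" unfolding d_def by simp
          ultimately have "dist x z < bdist G x" using True dpos by (simp add: dist_commute)
          then show "z \<in> G" using ball_in[OF x] by blast
        qed
        show "pathstart g = x" "pathfinish g = y" unfolding g_def by simp_all
        show "path_len g \<le> ennreal (C * dist x y)"
        proof -
          have "1 * r \<le> C * r" by (rule mult_right_mono[OF C1(1) r0])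
          then have "ennreal r \<le> ennreal (C * r)" by (intro ennreal_leI) simp
          then show ?thesis using pl unfolding r_def by (rule order_trans[rotated])
        qed
        fix t :: real assume t: "t \<in> {0..1}"
        have m: "min (seg_length g 0 t) (seg_length g t 1) \<le> ennreal r"
        proof -
          have "min (seg_length g 0 t) (seg_length g t 1) \<le> seg_length g 0 t" by simp
          also have "\<dots> \<le> ennreal (r * (t - 0))" by (rule segb)
          also have "\<dots> \<le> ennreal r" using t r0 by (intro ennreal_leI) (simp add: mult_left_le)
          finally show ?thesis .
        qed
        have "r / C \<le> bdist G (g t)"
        proof -
          have "dist x (g t) = t * r"
            using dist_linepath[of x y 0 t] t unfolding g_def r_def by (simp add: linepath_0')
          then have "dist x (g t) \<le> r" using t r0 by (simp add: mult_left_le_one_le)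
          moreover have "bdist G x \<le> bdist G (g t) + dist x (g t)" by (rule bdist_lip)
          moreover have "d \<le> bdist G x" unfolding d_def by simp
          moreover have "r / C \<le> r"
          proof -
            have "r / C \<le> r / 1" by (rule divide_left_mono) (use C1 r0 in auto)
            then show ?thesis by simp
          qed
          ultimately show ?thesis using True by linarith
        qed
        then show "ennreal (1 / C) * min (seg_length g 0 t) (seg_length g t 1) \<le> ennreal (bdist G (g t))"
          by (rule Hlem[OF m _ Cpos r0])
      qed
    next
      case False
      then have rd: "d / 2 < r" by simp
      have rpos: "r > 0" using rd dpos by simp
      obtain gm where gm: "rectifiable_path gm" "path_image gm \<subseteq> G" "pathstart gm = x" "pathfinish gm = y"
        and gmc: "\<forall>t\<in>{0..1}. min (seg_length gm 0 t) (seg_length gm t 1) \<le> ennreal (c * bdist G (gm t))"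
        using cone x y by blast
      interpret Gm: rpath gm
        using gm(1) unfolding rectifiable_path_def path_len_def by unfold_locales auto
      define L where "L = Gm.sl 0 1"
      have gm0: "gm 0 = x" "gm 1 = y" using gm(3,4) unfolding pathstart_def pathfinish_def by auto
      have gmG: "gm t \<in> G" if "0 \<le> t" "t \<le> 1" for t
        using gm(2) that unfolding path_image_def by auto
      show ?thesis
      proof (cases "L \<le> 2 * r")
        case True
        show ?thesis
        proof (intro exI[of _ gm] conjI ballI)
          show "rectifiable_path gm" "path_image gm \<subseteq> G" "pathstart gm = x" "pathfinish gm = y"
            using gm by auto
          have "path_len gm = ennreal L" unfolding path_len_def L_def using Gm.seg_eq[of 0 1] by simp
          also have "\<dots> \<le> ennreal (C * dist x y)"
          proof -
            have "2 * r \<le> C * r" by (rule mult_right_mono[OF C1(2) r0])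
            then show ?thesis using True unfolding r_def by (intro ennreal_leI) simp
          qed
          finally show "path_len gm \<le> ennreal (C * dist x y)" .
          fix t :: real assume t: "t \<in> {0..1}"
          have bt: "0 < bdist G (gm t)" using bpos[OF gmG] t by simp
          have b0: "0 \<le> c * bdist G (gm t)" using c bt by simp
          show "ennreal (1 / C) * min (seg_length gm 0 t) (seg_length gm t 1) \<le> ennreal (bdist G (gm t))"
            by (rule Hlem[OF gmc[rule_format, OF t] _ Cpos b0]) (use Hc bt in \<open>auto simp: less_imp_le\<close>)
        qed
      next
        case False
        then have L2: "2 * r < L" by simp
        have L_eq: "arclen_fun gm 1 = L" unfolding L_def using Gm.arclen_eq[of 1] by simp
        have F0: "arclen_fun gm 0 = 0" using Gm.arclen_eq[of 0] Gm.sl_refl by simp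
        have Fc: "continuous_on {0..1} (arclen_fun gm)" using continuous_on_subset[OF Gm.arclen_cont] by auto
        obtain t1 where t1: "0 \<le> t1" "t1 \<le> 1" "arclen_fun gm t1 = r"
          using IVT'[of "arclen_fun gm" 0 r 1] F0 L_eq L2 r0 Fc by auto
        obtain t2 where t2: "0 \<le> t2" "t2 \<le> 1" "arclen_fun gm t2 = L - r"
          using IVT'[of "arclen_fun gm" 0 "L - r" 1] F0 L_eq L2 r0 Fc by auto
        have s01: "Gm.sl 0 t1 = r" using t1 Gm.arclen_eq by simp
        have s11: "Gm.sl t1 1 = L - r" using Gm.sl_add[of 0 t1 1] t1 s01 unfolding L_def by simp
        have s02: "Gm.sl 0 t2 = L - r" using t2 Gm.arclen_eq by simp
        have s12: "Gm.sl t2 1 = r" using Gm.sl_add[of 0 t2 1] t2 s02 unfolding L_def by simp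
        have e01: "seg_length gm 0 t1 = ennreal r" using Gm.seg_eq[of 0 t1] t1 s01 by simp
        have e11: "seg_length gm t1 1 = ennreal (L - r)" using Gm.seg_eq[of t1 1] t1 s11 by simp
        have e02: "seg_length gm 0 t2 = ennreal (L - r)" using Gm.seg_eq[of 0 t2] t2 s02 by simp
        have e12: "seg_length gm t2 1 = ennreal r" using Gm.seg_eq[of t2 1] t2 s12 by simp
        have rLr: "r \<le> L - r" using L2 by simp
        define x' where "x' = gm t1"
        define y' where "y' = gm t2"
        have x'G: "x' \<in> G" "y' \<in> G" unfolding x'_def y'_def using gmG t1 t2 by auto
        have dx: "dist x x' \<le> r" using Gm.sl_dist[of 0 t1] t1 s01 gm0 unfolding x'_def by simp
        have dy: "dist y' y \<le> r" using Gm.sl_dist[of t2 1] t2 s12 gm0 unfolding y'_def by simp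
        have dx'y': "dist x' y' \<le> 3 * r"
          using dist_triangle[of x' y' x] dist_triangle[of x y' y] dx dy unfolding r_def
          by (simp add: dist_commute)
        have bx': "r \<le> c * bdist G x'"
        proof -
          have "min (seg_length gm 0 t1) (seg_length gm t1 1) = ennreal r"
            unfolding e01 e11 using ennreal_leI[OF rLr] by (rule min.absorb1)
          moreover have "min (seg_length gm 0 t1) (seg_length gm t1 1) \<le> ennreal (c * bdist G (gm t1))"
            using gmc t1(1,2) by simp
          ultimately have "ennreal r \<le> ennreal (c * bdist G x')" unfolding x'_def by simp
          moreover have "0 \<le> c * bdist G x'" using c bpos[OF x'G(1)] by simp
          ultimately show ?thesis by simp
        qed
        have by': "r \<le> c * bdist G y'"
        proof -
          have "min (seg_length gm 0 t2) (seg_length gm t2 1) = ennreal r"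
            unfolding e02 e12 using ennreal_leI[OF rLr] by (rule min.absorb2)
          moreover have "min (seg_length gm 0 t2) (seg_length gm t2 1) \<le> ennreal (c * bdist G (gm t2))"
            using gmc t2(1,2) by simp
          ultimately have "ennreal r \<le> ennreal (c * bdist G y')" unfolding y'_def by simp
          moreover have "0 \<le> c * bdist G y'" using c bpos[OF x'G(2)] by simp
          ultimately show ?thesis by simp
        qed
        define mm where "mm = min (bdist G x') (bdist G y')"
        have mm: "r \<le> c * mm" "mm > 0" unfolding mm_def using bx' by' bpos x'G by auto
        have ratio: "dist x' y' / mm \<le> 3 * c"
        proof -
          have "dist x' y' \<le> 3 * (c * mm)" using dx'y' mm by simp
          then show ?thesis using mm by (simp add: divide_le_eq algebra_simps)
        qed
        have ratio0: "0 \<le> dist x' y' / mm" using mm by simp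
        have phiA: "\<phi> (dist x' y' / mm) \<le> A"
          unfolding A_def using strict_mono_on_leD[OF assms(6)] ratio ratio0 c by simp
        have "qh_metric G x' y' \<le> ennreal (\<phi> (dist x' y' / mm))"
          using assms(9) x'G unfolding phi_uniform_def mm_def by blast
        also have "\<dots> \<le> ennreal A" using phiA by (rule ennreal_leI)
        also have "\<dots> < ennreal (A + 1)" using A0 by (simp add: ennreal_less_iff)
        finally have "qh_metric G x' y' < ennreal (A + 1)" .
        then obtain bt where bt: "rectifiable_path bt" "path_image bt \<subseteq> G" "pathstart bt = x'" "pathfinish bt = y'"
            and btq: "qh_length G bt < ennreal (A + 1)"
          unfolding qh_metric_def INF_less_iff by blast
        have btq': "qh_length G bt < ennreal (real k / 2)"
          using btq ennreal_leI[OF kA] by (rule less_le_trans)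
        interpret B: qpath bt G
          using bt bpos unfolding rectifiable_path_def path_len_def by unfold_locales auto
        have bt01: "bt 0 = x'" "bt 1 = y'" using bt(3,4) unfolding pathstart_def pathfinish_def by auto
        define D where "D = bdist G x'"
        have Dr: "r \<le> c * D" using bx' unfolding D_def .
        have bx: "bdist G x < 3 * r"
        proof -
          have "bdist G x \<le> bdist G y + dist x y" by (rule bdist_lip)
          moreover have "min (bdist G x) (bdist G y) < 2 * r" using rd unfolding d_def by simp
          ultimately show ?thesis using rpos unfolding r_def[symmetric]
            by (cases "bdist G x \<le> bdist G y") (simp_all add: min_def)
        qed
        have D4: "D < 4 * r"
          using bdist_lip[of G x' x] dx bx unfolding D_def by (simp add: dist_commute)
        define Lb where "Lb = B.sl 0 1"
        have Lb0: "0 \<le> Lb" unfolding Lb_def by (rule B.sl_nonneg)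
        have Lb: "Lb < N * D"
          using B.len_bound[OF btq'] B.arclen_eq[of 1] bt01 unfolding Lb_def N_def D_def by simp
        have Lb4: "Lb \<le> 4 * N * r"
        proof -
          have "N * D \<le> N * (4 * r)" by (rule mult_left_mono) (use D4 N1 in auto)
          then show ?thesis using Lb by (simp add: algebra_simps)
        qed
        have lowb: "D / N \<le> bdist G (bt u)" if "0 \<le> u" "u \<le> 1" for u
          using B.low_bound[OF btq' that] bt01 unfolding D_def N_def by simp
        define G1 where "G1 = subpath 0 t1 gm"
        define G3 where "G3 = subpath t2 1 gm"
        define GG where "GG = G1 +++ (bt +++ G3)"
        have G1_1: "G1 1 = x'" unfolding G1_def subpath_def x'_def by simp
        have G1_0: "G1 0 = x" unfolding G1_def subpath_def using gm0 by simp
        have G3_0: "G3 0 = y'" unfolding G3_def subpath_def y'_def by simp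
        have G3_1: "G3 1 = y" unfolding G3_def subpath_def using gm0 by simp
        have J0: "(bt +++ G3) 0 = x'" unfolding joinpaths_def using bt01 by simp
        have segG1: "seg_length G1 a b = seg_length gm (t1 * a) (t1 * b)" for a b
          unfolding G1_def using seg_subpath[of 0 t1 gm a b] t1 by simp
        have segG3: "seg_length G3 a b = seg_length gm ((1 - t2) * a + t2) ((1 - t2) * b + t2)" for a b
          unfolding G3_def using seg_subpath[of t2 1 gm a b] t2 by simp
        have segBG3: "seg_length (bt +++ G3) 0 1 = seg_length bt 0 1 + seg_length G3 0 1"
          by (rule seg_join) (simp add: bt01 G3_0)
        have segGG: "seg_length GG 0 1 = ennreal (2 * r + Lb)"
        proof -
          have "seg_length GG 0 1 = seg_length G1 0 1 + seg_length (bt +++ G3) 0 1"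
            unfolding GG_def by (rule seg_join) (simp add: G1_1 J0)
          also have "\<dots> = ennreal r + (ennreal Lb + ennreal r)"
            unfolding segBG3 segG1 segG3 using e01 e12 B.seg_eq[of 0 1] unfolding Lb_def by simp
          also have "\<dots> = ennreal (2 * r + Lb)" using r0 Lb0 by (simp add: ennreal_plus[symmetric] del: ennreal_plus)
          finally show ?thesis .
        qed
        have LamC: "2 * r + Lb \<le> C * r"
        proof -
          have "2 * r + Lb \<le> (2 + 4 * N) * r" using Lb4 by (simp add: algebra_simps)
          also have "\<dots> \<le> C * r" by (rule mult_right_mono[OF C_ge r0])
          finally show ?thesis .
        qed
        have pG1: "path G1" unfolding G1_def using Gm.pth t1 by simp
        have pG3: "path G3" unfolding G3_def using Gm.pth t2 by simp
        have pbt: "path bt" by (rule B.pth)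
        show ?thesis
        proof (intro exI[of _ GG] conjI ballI)
          show "rectifiable_path GG" unfolding rectifiable_path_def path_len_def
          proof
            show "path GG" unfolding GG_def using pG1 pG3 pbt
              by (simp add: pathfinish_def pathstart_def G1_1 J0 bt01 G3_0)
            show "seg_length GG 0 1 < \<infinity>" unfolding segGG by simp
          qed
          show "path_image GG \<subseteq> G"
          proof -
            have "path_image GG \<subseteq> path_image G1 \<union> (path_image bt \<union> path_image G3)"
              unfolding GG_def using path_image_join_subset by blast
            moreover have "path_image G1 \<subseteq> G" unfolding G1_def
              using path_image_subpath_subset[of 0 t1 gm] t1 gm(2) by auto
            moreover have "path_image G3 \<subseteq> G" unfolding G3_def
              using path_image_subpath_subset[of t2 1 gm] t2 gm(2) by auto
            ultimately show ?thesis using bt(2) by blast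
          qed
          show "pathstart GG = x" unfolding GG_def pathstart_def using G1_0 by (simp add: joinpaths_def)
          show "pathfinish GG = y" unfolding GG_def pathfinish_def using G3_1 by (simp add: joinpaths_def)
          show "path_len GG \<le> ennreal (C * dist x y)"
            unfolding path_len_def segGG r_def[symmetric] using LamC by (rule ennreal_leI)
          fix tau :: real assume tau: "tau \<in> {0..1}"
          define m where "m = min (seg_length GG 0 tau) (seg_length GG tau 1)"
          have mL: "m \<le> ennreal (2 * r + Lb)"
          proof -
            have "m \<le> seg_length GG 0 tau" unfolding m_def by simp
            also have "\<dots> \<le> seg_length GG 0 1" by (rule seg_mono) (use tau in auto)
            finally show ?thesis unfolding segGG .
          qed
          have Lam0: "0 \<le> 2 * r + Lb" using r0 Lb0 by simp
          have "ennreal (1 / C) * m \<le> ennreal (bdist G (GG tau))"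
          proof (cases "tau \<le> 1/2")
            case True
            define sg where "sg = t1 * (2 * tau)"
            have tt: "2 * tau \<le> 1" "0 \<le> 2 * tau" using True tau by auto
            have sg: "0 \<le> sg" "sg \<le> t1" unfolding sg_def
              using tt t1 by (simp, intro mult_left_le, auto)
            have GGt: "GG tau = gm sg" unfolding GG_def G1_def sg_def joinpaths_def subpath_def using True by simp
            have sGG: "seg_length GG 0 tau = seg_length gm 0 sg"
              unfolding GG_def using seg_join1[of 0 tau G1 "bt +++ G3"] True tau segG1 sg_def by simp
            have "seg_length gm 0 sg \<le> ennreal r" unfolding e01[symmetric] by (rule seg_mono) (use sg in auto)
            moreover have "ennreal r \<le> seg_length gm sg 1"
            proof -
              have "ennreal r \<le> ennreal (L - r)" using rLr by (rule ennreal_leI)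
              also have "\<dots> \<le> seg_length gm sg 1" unfolding e11[symmetric] by (rule seg_mono) (use sg in auto)
              finally show ?thesis .
            qed
            ultimately have "min (seg_length gm 0 sg) (seg_length gm sg 1) = seg_length gm 0 sg" by simp
            moreover have "min (seg_length gm 0 sg) (seg_length gm sg 1) \<le> ennreal (c * bdist G (gm sg))"
              using gmc sg t1 by simp
            ultimately have c1: "seg_length gm 0 sg \<le> ennreal (c * bdist G (gm sg))" by simp
            have "m \<le> ennreal (c * bdist G (GG tau))" unfolding m_def GGt using sGG c1 GGt by (simp add: min.coboundedI1)
            moreover have bt0: "0 < bdist G (GG tau)" unfolding GGt using bpos gmG sg t1 by simp
            ultimately show ?thesis
              by (intro Hlem[OF _ Hc]) (use c bt0 Cpos in auto)
          next
            case False
            show ?thesis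
            proof (cases "tau \<le> 3/4")
              case True
              have "\<exists>u. 0 \<le> u \<and> u \<le> 1 \<and> GG tau = bt u"
                using False True by (intro exI[of _ "4 * tau - 2"]) (auto simp: GG_def joinpaths_def)
              then obtain u where u: "0 \<le> u" "u \<le> 1" "GG tau = bt u" by blast
              have "(2 * r + Lb) / C \<le> r / ((c + 1) * N)"
              proof -
                have "(2 * r + Lb) / C \<le> ((2 + 4 * N) * r) / C"
                  using Lb4 Cpos by (intro divide_right_mono) (auto simp: algebra_simps)
                also have "\<dots> = r / ((c + 1) * N)"
                proof -
                  have Ce: "C = (2 + 4 * N) * ((c + 1) * N)" unfolding C_def by (simp add: mult.assoc)
                  have nz: "2 + 4 * N \<noteq> 0" using N1 by simp
                  show ?thesis unfolding Ce using nonzero_mult_divide_mult_cancel_left[OF nz, of r "(c + 1) * N"] .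
                qed
                finally show ?thesis .
              qed
              also have "\<dots> \<le> D / N"
              proof -
                have "r \<le> (c + 1) * D" using Dr bpos[OF x'G(1)] unfolding D_def by (simp add: algebra_simps)
                then have "r / (c + 1) \<le> D" using c by (simp add: divide_le_eq mult.commute)
                then have "(r / (c + 1)) / N \<le> D / N" using N1 by (intro divide_right_mono) auto
                then show ?thesis by (simp add: divide_divide_eq_left)
              qed
              also have "\<dots> \<le> bdist G (GG tau)" using lowb u by simp
              finally have "(2 * r + Lb) / C \<le> bdist G (GG tau)" .
              then show ?thesis by (rule Hlem[OF mL _ Cpos Lam0])
            next
              case False2: False
              define w where "w = 2 * tau - 1"
              have w: "1/2 < w" "w \<le> 1" unfolding w_def using False2 tau by auto
              define sg where "sg = (1 - t2) * (2 * w - 1) + t2"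
              have ww: "0 \<le> 2 * w - 1" "2 * w - 1 \<le> 1" "0 \<le> 1 - t2" using w t2 by auto
              have m1: "(1 - t2) * (2 * w - 1) \<le> 1 - t2" by (rule mult_left_le) (use ww in auto)
              have m2: "0 \<le> (1 - t2) * (2 * w - 1)" using ww by simp
              have sg: "t2 \<le> sg" "sg \<le> 1" unfolding sg_def using m1 m2 by auto
              have GGt: "GG tau = gm sg"
                unfolding GG_def G3_def sg_def joinpaths_def subpath_def using False False2 w unfolding w_def by simp
              have sGG: "seg_length GG tau 1 = seg_length gm sg 1"
              proof -
                have "seg_length GG tau 1 = seg_length (bt +++ G3) (2 * tau - 1) (2 * 1 - 1)"
                  unfolding GG_def by (rule seg_join2) (use False tau G1_1 J0 in auto)
                also have "\<dots> = seg_length (bt +++ G3) w 1" unfolding w_def by simp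
                also have "\<dots> = seg_length G3 (2 * w - 1) (2 * 1 - 1)"
                  by (rule seg_join2) (use w bt01 G3_0 in auto)
                also have "\<dots> = seg_length gm sg 1" unfolding segG3 sg_def by simp
                finally show ?thesis .
              qed
              have "seg_length gm sg 1 \<le> ennreal r" unfolding e12[symmetric] by (rule seg_mono) (use sg in auto)
              moreover have "ennreal r \<le> seg_length gm 0 sg"
              proof -
                have "ennreal r \<le> ennreal (L - r)" using rLr by (rule ennreal_leI)
                also have "\<dots> \<le> seg_length gm 0 sg" unfolding e02[symmetric] by (rule seg_mono) (use sg in auto)
                finally show ?thesis .
              qed
              ultimately have "min (seg_length gm 0 sg) (seg_length gm sg 1) = seg_length gm sg 1" by simp
              moreover have "min (seg_length gm 0 sg) (seg_length gm sg 1) \<le> ennreal (c * bdist G (gm sg))"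
                using gmc sg t2 by simp
              ultimately have c1: "seg_length gm sg 1 \<le> ennreal (c * bdist G (gm sg))" by simp
              have "m \<le> ennreal (c * bdist G (GG tau))" unfolding m_def GGt using sGG c1 GGt by (simp add: min.coboundedI2)
              moreover have bt0: "0 < bdist G (GG tau)" unfolding GGt using bpos gmG sg t2 by simp
              ultimately show ?thesis
                by (intro Hlem[OF _ Hc]) (use c bt0 Cpos in auto)
            qed
          qed
          then show "ennreal (1 / C) * min (seg_length GG 0 tau) (seg_length GG tau 1) \<le> ennreal (bdist G (GG tau))"
            unfolding m_def .
        qed
      qed
    qed
  qed
qed

end
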